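(* In the standing setting below, let $x'\in\mathbb{X}$, $y_0,y_1\in\mathbb{Y}$ with $y_0\ne y_1$, and $f_i(x)=-c(x,y_i)+c(x',y_i)$ for $i=0,1$. Let $S=\{x\in\mathbb{X}: f_0(x)\le f_1(x)\}$. If $f_0(x_0)=f_1(x_0)$ for some $x_0\in\mathbb{X}$, then $x_0\in\partial S$ (boundary in $\mathbb{R}^n$).
   Context: Standing setting: $\mathbb{X},\mathbb{Y}\subset\mathbb{R}^n$ are compact with non-empty interior; $c:\mathbb{X}\times\mathbb{Y}\to\mathbb{R}$ has continuous $D_xc$, $D_yc$, and continuous mixed second derivatives with $D^2_{xy}c=(D^2_{yx}c)^T$; for each $x$ the map $y\mapsto -D_xc(x,y)$ is injective on $\mathbb{Y}$ and for each $y$ the map $x\mapsto -D_yc(x,y)$ is injective on $\mathbb{X}$; $D^2_{xy}c(x,y)$ is invertible everywhere; for every $y$ the set $\{-D_yc(x,y):x\in\mathbb{X}\}$ is convex and for every $x$ the set $\{-D_xc(x,y):y\in\mathbb{Y}\}$ is convex. *)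

theory Defs
  imports "HOL-Analysis.Analysis"
begin

text \<open>Dxc x y is the gradient of c in x, Dyc x y the gradient of c in y;
  Dxyc x y = D_y (D_x c)(x,y) and Dyxc x y = D_x (D_y c)(x,y) are the mixed
  second derivatives (as bounded linear maps).\<close>

definition standing_setting ::
  "'a::euclidean_space set \<Rightarrow> 'a set \<Rightarrow> ('a \<Rightarrow> 'a \<Rightarrow> real)
   \<Rightarrow> ('a \<Rightarrow> 'a \<Rightarrow> 'a) \<Rightarrow> ('a \<Rightarrow> 'a \<Rightarrow> 'a)
   \<Rightarrow> ('a \<Rightarrow> 'a \<Rightarrow> ('a \<Rightarrow>\<^sub>L 'a)) \<Rightarrow> ('a \<Rightarrow> 'a \<Rightarrow> ('a \<Rightarrow>\<^sub>L 'a)) \<Rightarrow> bool" where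
  "standing_setting X Y c Dxc Dyc Dxyc Dyxc \<longleftrightarrow>
     compact X \<and> compact Y \<and> interior X \<noteq> {} \<and> interior Y \<noteq> {} \<and>
     (\<forall>x\<in>X. \<forall>y\<in>Y. ((\<lambda>x'. c x' y) has_derivative (\<lambda>h. Dxc x y \<bullet> h)) (at x within X)) \<and>
     (\<forall>x\<in>X. \<forall>y\<in>Y. ((\<lambda>y'. c x y') has_derivative (\<lambda>h. Dyc x y \<bullet> h)) (at y within Y)) \<and>
     continuous_on (X \<times> Y) (\<lambda>(x,y). Dxc x y) \<and>
     continuous_on (X \<times> Y) (\<lambda>(x,y). Dyc x y) \<and>
     (\<forall>x\<in>X. \<forall>y\<in>Y. ((\<lambda>y'. Dxc x y') has_derivative blinfun_apply (Dxyc x y)) (at y within Y)) \<and>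
     (\<forall>x\<in>X. \<forall>y\<in>Y. ((\<lambda>x'. Dyc x' y) has_derivative blinfun_apply (Dyxc x y)) (at x within X)) \<and>
     continuous_on (X \<times> Y) (\<lambda>(x,y). Dxyc x y) \<and>
     continuous_on (X \<times> Y) (\<lambda>(x,y). Dyxc x y) \<and>
     (\<forall>x\<in>X. \<forall>y\<in>Y. \<forall>u v. (Dxyc x y u) \<bullet> v = u \<bullet> (Dyxc x y v)) \<and>
     (\<forall>x\<in>X. inj_on (\<lambda>y. - Dxc x y) Y) \<and>
     (\<forall>y\<in>Y. inj_on (\<lambda>x. - Dyc x y) X) \<and>
     (\<forall>x\<in>X. \<forall>y\<in>Y. bij (blinfun_apply (Dxyc x y))) \<and>
     (\<forall>y\<in>Y. convex ((\<lambda>x. - Dyc x y) ` X)) \<and>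
     (\<forall>x\<in>X. convex ((\<lambda>y. - Dxc x y) ` Y))"

end

theory Submission
  imports Defs
begin

theorem lemma2p19:
  fixes X Y :: "'a::euclidean_space set" and c :: "'a \<Rightarrow> 'a \<Rightarrow> real"
  assumes "standing_setting X Y c Dxc Dyc Dxyc Dyxc"
    and "x' \<in> X" and "y0 \<in> Y" and "y1 \<in> Y" and "y0 \<noteq> y1"
    and "f0 = (\<lambda>x. - c x y0 + c x' y0)" and "f1 = (\<lambda>x. - c x y1 + c x' y1)"
    and "S = {x\<in>X. f0 x \<le> f1 x}"
    and "x0 \<in> X" and "f0 x0 = f1 x0"
  shows "x0 \<in> frontier S"
proof -
  note ss = assms(1)[unfolded standing_setting_def]
  have inS: "x0 \<in> S" using assms by auto
  have "x0 \<notin> interior S"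
  proof
    assume xi: "x0 \<in> interior S"
    have "S \<subseteq> X" using assms by auto
    hence xX: "x0 \<in> interior X" using xi interior_mono by blast
    define g where "g = (\<lambda>x. f1 x - f0 x)"
    have d0: "((\<lambda>x. c x y0) has_derivative (\<lambda>h. Dxc x0 y0 \<bullet> h)) (at x0)"
      using ss assms(3,9) at_within_interior[OF xX] by metis
    have d1: "((\<lambda>x. c x y1) has_derivative (\<lambda>h. Dxc x0 y1 \<bullet> h)) (at x0)"
      using ss assms(4,9) at_within_interior[OF xX] by metis
    have gd: "(g has_derivative (\<lambda>h. (Dxc x0 y0 - Dxc x0 y1) \<bullet> h)) (at x0)"
    proof -
      have "((\<lambda>x. c x y0 - c x y1 + (c x' y1 - c x' y0)) has_derivative
            (\<lambda>h. Dxc x0 y0 \<bullet> h - Dxc x0 y1 \<bullet> h + 0)) (at x0)"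
        by (intro derivative_intros d0 d1)
      moreover have "g = (\<lambda>x. c x y0 - c x y1 + (c x' y1 - c x' y0))"
        unfolding g_def assms(6,7) by (auto simp: algebra_simps)
      ultimately show ?thesis by (simp add: inner_diff_left)
    qed
    have ev: "eventually (\<lambda>y. g x0 \<le> g y) (at x0)"
    proof -
      have "eventually (\<lambda>y. y \<in> interior S) (at x0)"
        using xi by (intro eventually_at_in_open') auto
      thus ?thesis
        by eventually_elim (use assms interior_subset g_def in auto)
    qed
    have "(\<lambda>h. (Dxc x0 y0 - Dxc x0 y1) \<bullet> h) = (\<lambda>h. 0)"
      by (rule has_derivative_local_min[OF gd ev])
    hence "(Dxc x0 y0 - Dxc x0 y1) \<bullet> (Dxc x0 y0 - Dxc x0 y1) = 0" by metis
    hence "Dxc x0 y0 = Dxc x0 y1" by simp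
    hence "- Dxc x0 y0 = - Dxc x0 y1" by simp
    moreover have "inj_on (\<lambda>y. - Dxc x0 y) Y" using ss assms(9) by blast
    ultimately have "y0 = y1" using assms(3,4) inj_onD[of "\<lambda>y. - Dxc x0 y" Y y0 y1] by simp
    thus False using assms(5) by simp
  qed
  thus ?thesis using inS closure_subset unfolding frontier_def by blast
qed

end
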